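(* For every integer $n\geq 1$, $$c_n(231,132 : 231)=c_n(312,213 : 312)=\begin{cases}k^2+1 & \text{if } n=2k,\\ k^2+k+1 & \text{if } n=2k+1.\end{cases}$$
   Context: $S_n$ is the symmetric group on $[n]=\{1,\dots,n\}$, and a permutation $\pi\in S_n$ is written in one-line notation $\pi=\pi_1\pi_2\cdots\pi_n$ with $\pi_i=\pi(i)$. For $\tau\in S_k$, $k\le n$, $\pi$ contains $\tau$ if there are indices $i_1<\dots<i_k$ with $\pi_{i_s}>\pi_{i_t}$ iff $\tau_s>\tau_t$ for all $1\le s<t\le k$; otherwise $\pi$ avoids $\tau$. $\pi^2$ denotes the composition $\pi\circ\pi$. For patterns $\sigma_1,\sigma_2,\rho$, $c_n(\sigma_1,\sigma_2 : \rho)$ denotes the number of permutations $\pi\in S_n$ such that $\pi$ avoids both $\sigma_1$ and $\sigma_2$ and $\pi^2$ avoids $\rho$. *)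

theory Defs
  imports "HOL-Combinatorics.Permutations"
begin

text \<open>A pattern \<tau> \<in> S_k is given in
  one-line notation as a list of length k (e.g. 231 = [2,3,1]).\<close>

definition contains :: "(nat \<Rightarrow> nat) \<Rightarrow> nat \<Rightarrow> nat list \<Rightarrow> bool" where
  "contains \<pi> n \<tau> \<longleftrightarrow> length \<tau> \<le> n \<and>
     (\<exists>i :: nat \<Rightarrow> nat.
        (\<forall>s t. 1 \<le> s \<and> s < t \<and> t \<le> length \<tau> \<longrightarrow> i s < i t) \<and>
        (\<forall>s. 1 \<le> s \<and> s \<le> length \<tau> \<longrightarrow> 1 \<le> i s \<and> i s \<le> n) \<and>
        (\<forall>s t. 1 \<le> s \<and> s < t \<and> t \<le> length \<tau> \<longrightarrow>
           (\<pi> (i s) > \<pi> (i t) \<longleftrightarrow> \<tau> ! (s - 1) > \<tau> ! (t - 1))))"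

definition avoids :: "(nat \<Rightarrow> nat) \<Rightarrow> nat \<Rightarrow> nat list \<Rightarrow> bool" where
  "avoids \<pi> n \<tau> \<longleftrightarrow> \<not> contains \<pi> n \<tau>"

definition cnt :: "nat \<Rightarrow> nat list \<Rightarrow> nat list \<Rightarrow> nat list \<Rightarrow> nat" where
  "cnt n \<sigma>1 \<sigma>2 \<rho> = card {\<pi>. \<pi> permutes {1..n} \<and> avoids \<pi> n \<sigma>1 \<and> avoids \<pi> n \<sigma>2
                              \<and> avoids (\<pi> \<circ> \<pi>) n \<rho>}"

end

theory Submission
  imports Defs
begin

lemma contains3:
  "contains \<pi> n [a,b,c] \<longleftrightarrow> (\<exists>x y z. 1 \<le> x \<and> x < y \<and> y < z \<and> z \<le> n \<and>
     (\<pi> x > \<pi> y \<longleftrightarrow> a > b) \<and> (\<pi> x > \<pi> z \<longleftrightarrow> a > c) \<and> (\<pi> y > \<pi> z \<longleftrightarrow> b > c))"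
  (is "?L \<longleftrightarrow> ?R")
proof
  assume ?L
  then obtain i where h1: "\<forall>s t. 1 \<le> s \<and> s < t \<and> t \<le> length [a,b,c] \<longrightarrow> i s < i t"
    and h2: "\<forall>s. 1\<le>s \<and> s \<le> length [a,b,c] \<longrightarrow> 1 \<le> i s \<and> i s \<le> n"
    and h3: "\<forall>s t. 1 \<le> s \<and> s < t \<and> t \<le> length [a,b,c] \<longrightarrow> (\<pi> (i s) > \<pi> (i t) \<longleftrightarrow> [a,b,c] ! (s-1) > [a,b,c] ! (t-1))"
    unfolding contains_def by blast
  have "1 \<le> i 1" "i 1 < i 2" "i 2 < i 3" "i 3 \<le> n"
    using h1[rule_format, of 1 2] h1[rule_format, of 2 3] h2[rule_format, of 1] h2[rule_format, of 3] by auto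
  moreover have "(\<pi> (i 1) > \<pi> (i 2) \<longleftrightarrow> a > b)" "(\<pi> (i 1) > \<pi> (i 3) \<longleftrightarrow> a > c)" "(\<pi> (i 2) > \<pi> (i 3) \<longleftrightarrow> b > c)"
    using h3[rule_format, of 1 2] h3[rule_format, of 1 3] h3[rule_format, of 2 3] by auto
  ultimately show ?R by blast
next
  assume ?R
  then obtain x y z where xyz: "1 \<le> x" "x < y" "y < z" "z \<le> n"
     "(\<pi> x > \<pi> y \<longleftrightarrow> a > b)" "(\<pi> x > \<pi> z \<longleftrightarrow> a > c)" "(\<pi> y > \<pi> z \<longleftrightarrow> b > c)" by blast
  define i where "i = (\<lambda>s::nat. if s = 1 then x else if s = 2 then y else z)"
  have st: "(s=1 \<and> t=2) \<or> (s=1 \<and> t=3) \<or> (s=2 \<and> t=3)" if "1 \<le> s" "s < t" "t \<le> 3" for s t :: nat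
    using that by auto
  have ss: "s=1 \<or> s=2 \<or> s=3" if "1 \<le> s" "s \<le> 3" for s :: nat
    using that by auto
  show ?L unfolding contains_def
  proof (intro conjI exI[of _ i] allI impI)
    show "length [a,b,c] \<le> n" using xyz by simp
  next
    fix s t assume "1 \<le> s \<and> s < t \<and> t \<le> length [a,b,c]"
    then have "(s=1 \<and> t=2) \<or> (s=1 \<and> t=3) \<or> (s=2 \<and> t=3)" using st by simp
    then show "i s < i t" using xyz by (auto simp: i_def)
  next
    fix s assume "1 \<le> s \<and> s \<le> length [a,b,c]"
    then have "s=1 \<or> s=2 \<or> s=3" using ss by simp
    then show "1 \<le> i s" using xyz by (auto simp: i_def)
  next
    fix s assume "1 \<le> s \<and> s \<le> length [a,b,c]"
    then have "s=1 \<or> s=2 \<or> s=3" using ss by simp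
    then show "i s \<le> n" using xyz by (auto simp: i_def)
  next
    fix s t assume "1 \<le> s \<and> s < t \<and> t \<le> length [a,b,c]"
    then have "(s=1 \<and> t=2) \<or> (s=1 \<and> t=3) \<or> (s=2 \<and> t=3)" using st by simp
    then show "(\<pi> (i s) > \<pi> (i t) \<longleftrightarrow> [a,b,c] ! (s-1) > [a,b,c] ! (t-1))" using xyz by (auto simp: i_def)
  qed
qed

lemma c312: "contains \<pi> n [3,1,2] \<longleftrightarrow> (\<exists>x y z. 1 \<le> x \<and> x < y \<and> y < z \<and> z \<le> n \<and>
     \<pi> x > \<pi> y \<and> \<pi> x > \<pi> z \<and> \<not> \<pi> y > \<pi> z)"
  by (simp add: contains3)

lemma c213: "contains \<pi> n [2,1,3] \<longleftrightarrow> (\<exists>x y z. 1 \<le> x \<and> x < y \<and> y < z \<and> z \<le> n \<and>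
     \<pi> x > \<pi> y \<and> \<not> \<pi> x > \<pi> z \<and> \<not> \<pi> y > \<pi> z)"
  by (simp add: contains3)

definition w :: "nat \<Rightarrow> nat \<Rightarrow> nat" where
  "w n p = (if 1 \<le> p \<and> p \<le> n then n + 1 - p else p)"

lemma ww: "w n (w n p) = p" by (auto simp: w_def)

lemma w_comp: "w n \<circ> w n = id" by (simp add: fun_eq_iff ww)

lemma w_permutes: "w n permutes {1..n}"
  unfolding permutes_def
proof (intro conjI allI impI)
  fix x assume "x \<notin> {1..n}" then show "w n x = x" by (auto simp: w_def)
next
  fix y show "\<exists>!x. w n x = y"
  proof (rule ex1I[of _ "w n y"])
    show "w n (w n y) = y" by (rule ww)
  next
    fix x assume "w n x = y" then show "x = w n y" using ww[of n x] by simp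
  qed
qed

definition rc :: "nat \<Rightarrow> (nat \<Rightarrow> nat) \<Rightarrow> nat \<Rightarrow> nat" where
  "rc n \<pi> = w n \<circ> \<pi> \<circ> w n"

lemma rc_permutes: "\<pi> permutes {1..n} \<Longrightarrow> rc n \<pi> permutes {1..n}"
  unfolding rc_def by (rule permutes_compose[OF w_permutes permutes_compose[OF _ w_permutes]])

lemma rc_rc: "rc n (rc n \<pi>) = \<pi>"
  unfolding rc_def by (simp add: fun_eq_iff ww)

lemma rc_sq: "rc n \<pi> \<circ> rc n \<pi> = rc n (\<pi> \<circ> \<pi>)"
  unfolding rc_def by (simp add: fun_eq_iff ww)

lemma rc_val: "\<pi> permutes {1..n} \<Longrightarrow> 1 \<le> x \<Longrightarrow> x \<le> n \<Longrightarrow> rc n \<pi> x = n + 1 - \<pi> (n + 1 - x)"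
proof -
  assume p: "\<pi> permutes {1..n}" and x: "1 \<le> x" "x \<le> n"
  have "n + 1 - x \<in> {1..n}" unfolding atLeastAtMost_iff using x by (intro conjI; linarith)
  then have h: "\<pi> (n + 1 - x) \<in> {1..n}" using permutes_in_image[OF p] by blast
  have "rc n \<pi> x = w n (\<pi> (w n x))" by (simp add: rc_def)
  also have "w n x = n + 1 - x" using x by (simp add: w_def)
  also have "w n (\<pi> (n + 1 - x)) = n + 1 - \<pi> (n + 1 - x)" using h by (simp add: w_def)
  finally show ?thesis .
qed

lemma perm_range: "\<pi> permutes {1..n} \<Longrightarrow> 1 \<le> x \<Longrightarrow> x \<le> n \<Longrightarrow> 1 \<le> \<pi> x \<and> \<pi> x \<le> n"
proof -
  assume p: "\<pi> permutes {1..n}" and x: "1 \<le> x" "x \<le> n"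
  then have "x \<in> {1..n}" by simp
  then have "\<pi> x \<in> {1..n}" using permutes_in_image[OF p] by blast
  then show ?thesis unfolding atLeastAtMost_iff .
qed

lemma contains_rc:
  assumes p: "\<pi> permutes {1..n}"
    and e1: "(b' > c' \<longleftrightarrow> a > b)" and e2: "(a' > c' \<longleftrightarrow> a > c)" and e3: "(a' > b' \<longleftrightarrow> b > c)"
  shows "contains (rc n \<pi>) n [a,b,c] \<longleftrightarrow> contains \<pi> n [a',b',c']"
proof
  assume "contains (rc n \<pi>) n [a,b,c]"
  then obtain x y z where h: "1 \<le> x" "x < y" "y < z" "z \<le> n"
     "(rc n \<pi> x > rc n \<pi> y \<longleftrightarrow> a > b)" "(rc n \<pi> x > rc n \<pi> z \<longleftrightarrow> a > c)" "(rc n \<pi> y > rc n \<pi> z \<longleftrightarrow> b > c)"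
    unfolding contains3 by blast
  have r: "rc n \<pi> x = n + 1 - \<pi> (n+1-x)" "rc n \<pi> y = n + 1 - \<pi> (n+1-y)" "rc n \<pi> z = n + 1 - \<pi> (n+1-z)"
    using h rc_val[OF p] by auto
  have b: "1 \<le> \<pi> (n+1-x) \<and> \<pi> (n+1-x) \<le> n" "1 \<le> \<pi> (n+1-y) \<and> \<pi> (n+1-y) \<le> n" "1 \<le> \<pi> (n+1-z) \<and> \<pi> (n+1-z) \<le> n"
    using h perm_range[OF p] by auto
  have i: "1 \<le> n+1-z" "n+1-z < n+1-y" "n+1-y < n+1-x" "n+1-x \<le> n" using h by linarith+
  have q1: "(\<pi> (n+1-z) > \<pi> (n+1-y) \<longleftrightarrow> a' > b')"
  proof -
    have "(\<pi> (n+1-z) > \<pi> (n+1-y)) \<longleftrightarrow> (rc n \<pi> y > rc n \<pi> z)" unfolding r using b by (intro iffI; linarith)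
    then show ?thesis using h(7) e3 by blast
  qed
  have q2: "(\<pi> (n+1-z) > \<pi> (n+1-x) \<longleftrightarrow> a' > c')"
  proof -
    have "(\<pi> (n+1-z) > \<pi> (n+1-x)) \<longleftrightarrow> (rc n \<pi> x > rc n \<pi> z)" unfolding r using b by (intro iffI; linarith)
    then show ?thesis using h(6) e2 by blast
  qed
  have q3: "(\<pi> (n+1-y) > \<pi> (n+1-x) \<longleftrightarrow> b' > c')"
  proof -
    have "(\<pi> (n+1-y) > \<pi> (n+1-x)) \<longleftrightarrow> (rc n \<pi> x > rc n \<pi> y)" unfolding r using b by (intro iffI; linarith)
    then show ?thesis using h(5) e1 by blast
  qed
  show "contains \<pi> n [a',b',c']" unfolding contains3 using i q1 q2 q3 by blast
next
  assume "contains \<pi> n [a',b',c']"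
  then obtain x y z where h: "1 \<le> x" "x < y" "y < z" "z \<le> n"
     "(\<pi> x > \<pi> y \<longleftrightarrow> a' > b')" "(\<pi> x > \<pi> z \<longleftrightarrow> a' > c')" "(\<pi> y > \<pi> z \<longleftrightarrow> b' > c')"
    unfolding contains3 by blast
  have r: "rc n \<pi> (n+1-x) = n + 1 - \<pi> x" "rc n \<pi> (n+1-y) = n + 1 - \<pi> y" "rc n \<pi> (n+1-z) = n + 1 - \<pi> z"
    using h rc_val[OF p] by auto
  have b: "1 \<le> \<pi> x \<and> \<pi> x \<le> n" "1 \<le> \<pi> y \<and> \<pi> y \<le> n" "1 \<le> \<pi> z \<and> \<pi> z \<le> n"
    using h perm_range[OF p] by auto
  have i: "1 \<le> n+1-z" "n+1-z < n+1-y" "n+1-y < n+1-x" "n+1-x \<le> n" using h by linarith+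
  have q1: "(rc n \<pi> (n+1-z) > rc n \<pi> (n+1-y) \<longleftrightarrow> a > b)"
  proof -
    have "(rc n \<pi> (n+1-z) > rc n \<pi> (n+1-y)) \<longleftrightarrow> (\<pi> y > \<pi> z)" unfolding r using b by (intro iffI; linarith)
    then show ?thesis using h(7) e1 by blast
  qed
  have q2: "(rc n \<pi> (n+1-z) > rc n \<pi> (n+1-x) \<longleftrightarrow> a > c)"
  proof -
    have "(rc n \<pi> (n+1-z) > rc n \<pi> (n+1-x)) \<longleftrightarrow> (\<pi> x > \<pi> z)" unfolding r using b by (intro iffI; linarith)
    then show ?thesis using h(6) e2 by blast
  qed
  have q3: "(rc n \<pi> (n+1-y) > rc n \<pi> (n+1-x) \<longleftrightarrow> b > c)"
  proof -
    have "(rc n \<pi> (n+1-y) > rc n \<pi> (n+1-x)) \<longleftrightarrow> (\<pi> x > \<pi> y)" unfolding r using b by (intro iffI; linarith)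
    then show ?thesis using h(5) e3 by blast
  qed
  show "contains (rc n \<pi>) n [a,b,c]" unfolding contains3 using i q1 q2 q3 by blast
qed

lemma first_eq: "cnt n [2,3,1] [1,3,2] [2,3,1] = cnt n [3,1,2] [2,1,3] [3,1,2]"
proof -
  let ?A = "{\<pi>. \<pi> permutes {1..n} \<and> avoids \<pi> n [2,3,1] \<and> avoids \<pi> n [1,3,2] \<and> avoids (\<pi> \<circ> \<pi>) n [2,3,1]}"
  let ?B = "{\<pi>. \<pi> permutes {1..n} \<and> avoids \<pi> n [3,1,2] \<and> avoids \<pi> n [2,1,3] \<and> avoids (\<pi> \<circ> \<pi>) n [3,1,2]}"
  have k1: "contains (rc n \<pi>) n [3,1,2] \<longleftrightarrow> contains \<pi> n [2,3,1]" if p: "\<pi> permutes {1..n}" for \<pi>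
    by (rule contains_rc[OF p]) simp_all
  have k2: "contains (rc n \<pi>) n [2,1,3] \<longleftrightarrow> contains \<pi> n [1,3,2]" if p: "\<pi> permutes {1..n}" for \<pi>
    by (rule contains_rc[OF p]) simp_all
  have k3: "contains (rc n \<pi>) n [2,3,1] \<longleftrightarrow> contains \<pi> n [3,1,2]" if p: "\<pi> permutes {1..n}" for \<pi>
    by (rule contains_rc[OF p]) simp_all
  have k4: "contains (rc n \<pi>) n [1,3,2] \<longleftrightarrow> contains \<pi> n [2,1,3]" if p: "\<pi> permutes {1..n}" for \<pi>
    by (rule contains_rc[OF p]) simp_all
  have AB: "rc n \<pi> \<in> ?B" if "\<pi> \<in> ?A" for \<pi>
  proof -
    have p: "\<pi> permutes {1..n}" using that by auto
    have pp: "\<pi> \<circ> \<pi> permutes {1..n}" using permutes_compose[OF p p] .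
    show ?thesis using that rc_permutes[OF p] k1[OF p] k2[OF p] k1[OF pp]
      by (simp add: avoids_def rc_sq)
  qed
  have BA: "rc n \<pi> \<in> ?A" if "\<pi> \<in> ?B" for \<pi>
  proof -
    have p: "\<pi> permutes {1..n}" using that by auto
    have pp: "\<pi> \<circ> \<pi> permutes {1..n}" using permutes_compose[OF p p] .
    show ?thesis using that rc_permutes[OF p] k3[OF p] k4[OF p] k3[OF pp]
      by (simp add: avoids_def rc_sq)
  qed
  have "bij_betw (rc n) ?A ?B"
    by (rule bij_betw_byWitness[of _ "rc n"]) (use AB BA rc_rc in auto)
  then show ?thesis unfolding cnt_def by (rule bij_betw_same_card)
qed


definition P :: "nat \<Rightarrow> nat \<Rightarrow> nat \<Rightarrow> nat \<Rightarrow> nat" where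
  "P n a m p = (if p \<le> a then p else if p \<le> m then p + n - m else if p \<le> n then a + n + 1 - p else p)"

definition Q :: "nat \<Rightarrow> nat \<Rightarrow> nat \<Rightarrow> nat \<Rightarrow> nat" where
  "Q n a m p = (if p \<le> a then p else if p \<le> m then a + m + 1 - p else if p + m \<le> a + n then p
     else if p \<le> n then a + 2*n + 1 - m - p else p)"

lemma P_permutes:
  assumes "a < m" "2*m \<le> n + a"
  shows "P n a m permutes {1..n}"
proof (rule inj_imp_permutes)
  show "inj_on (P n a m) {1..n}"
    unfolding inj_on_def P_def using assms by (auto split: if_splits)
  show "finite {1..n}" by simp
  show "P n a m x \<in> {1..n}" if "x \<in> {1..n}" for x
    using that assms unfolding P_def by auto
  show "P n a m x = x" if "x \<notin> {1..n}" for x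
    using that assms unfolding P_def by auto
qed

lemma P_sq:
  assumes "a < m" "2*m \<le> n + a"
  shows "P n a m \<circ> P n a m = Q n a m"
proof
  fix p
  show "(P n a m \<circ> P n a m) p = Q n a m p"
    using assms unfolding P_def Q_def by (auto split: if_splits)
qed

lemma P_nv1:
  assumes "a < m" "2*m \<le> n + a" "1 \<le> x" "x < y" "y < z" "z \<le> n"
    "P n a m y < P n a m x" "P n a m y \<le> P n a m z"
  shows False
  using assms unfolding P_def by (auto split: if_splits)

lemma P_nv2:
  assumes "a < m" "2*m \<le> n + a" "1 \<le> x" "x < y" "y < z" "z \<le> n"
    "P n a m y < P n a m x" "P n a m x \<le> P n a m z"
  shows False
  using assms unfolding P_def by (auto split: if_splits)

lemma Q_av:
  assumes "a < m" "2*m \<le> n + a" "1 \<le> x" "x < y" "y < z" "z \<le> n"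
    "Q n a m y < Q n a m x" "Q n a m z < Q n a m x" "Q n a m y \<le> Q n a m z"
  shows False
  using assms unfolding Q_def by (auto split: if_splits)


lemma gap_inc:
  fixes f :: "nat \<Rightarrow> nat"
  assumes "\<And>x y. i \<le> x \<Longrightarrow> x < y \<Longrightarrow> y \<le> j \<Longrightarrow> f x < f y" "i \<le> p" "p \<le> j"
  shows "f i + (p - i) \<le> f p"
  using assms(2,3)
proof (induction p rule: dec_induct)
  case base then show ?case by simp
next
  case (step q)
  have "f q < f (Suc q)" using assms(1)[of q "Suc q"] step by simp
  then show ?case using step by simp
qed

lemma gap_dec:
  fixes f :: "nat \<Rightarrow> nat"
  assumes "\<And>x y. i \<le> x \<Longrightarrow> x < y \<Longrightarrow> y \<le> j \<Longrightarrow> f y < f x" "i \<le> p" "p \<le> j"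
  shows "f p + (p - i) \<le> f i"
  using assms(2,3)
proof (induction p rule: dec_induct)
  case base then show ?case by simp
next
  case (step q)
  have "f (Suc q) < f q" using assms(1)[of q "Suc q"] step by simp
  then show ?case using step by simp
qed

lemma necessity:
  fixes \<pi> :: "nat \<Rightarrow> nat"
  assumes p: "\<pi> permutes {1..n}"
    and a1: "\<not> contains \<pi> n [3,1,2]" and a2: "\<not> contains \<pi> n [2,1,3]"
    and a3: "\<not> contains (\<pi> \<circ> \<pi>) n [3,1,2]"
    and ne: "\<pi> \<noteq> id"
  shows "\<exists>a m. a < m \<and> 2*m \<le> n+a \<and> \<pi> = P n a m"
proof -
  have rng: "1 \<le> \<pi> x \<and> \<pi> x \<le> n" if "1 \<le> x" "x \<le> n" for x
    using perm_range[OF p] that by blast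
  have out: "\<pi> x = x" if "x < 1 \<or> n < x" for x
    using permutes_not_in[OF p, of x] that by auto
  have inj: "x = y" if "\<pi> x = \<pi> y" for x y
    using permutes_inj[OF p] that by (auto simp: inj_def)
  have surj: "\<exists>q. 1 \<le> q \<and> q \<le> n \<and> \<pi> q = v" if "1 \<le> v" "v \<le> n" for v
  proof -
    have "v \<in> \<pi> ` {1..n}" using permutes_image[OF p] that by auto
    then show ?thesis by auto
  qed
  have NV: False if "1 \<le> x" "x < y" "y < z" "z \<le> n" "\<pi> y < \<pi> x" "\<pi> y < \<pi> z" for x y z
  proof (cases "\<pi> x > \<pi> z")
    case True
    then have "contains \<pi> n [3,1,2]" unfolding c312 using that by (intro exI[of _ x] exI[of _ y] exI[of _ z]) auto
    then show False using a1 by simp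
  next
    case False
    then have "contains \<pi> n [2,1,3]" unfolding c213 using that by (intro exI[of _ x] exI[of _ y] exI[of _ z]) auto
    then show False using a2 by simp
  qed
  define s where "s = \<pi> \<circ> \<pi>"
  have SV: False if "1 \<le> x" "x < y" "y < z" "z \<le> n" "s y < s x" "s z < s x" "s y < s z" for x y z
  proof -
    have "contains (\<pi> \<circ> \<pi>) n [3,1,2]" unfolding c312 using that unfolding s_def
      by (intro exI[of _ x] exI[of _ y] exI[of _ z]) auto
    then show False using a3 by simp
  qed
  obtain p0 where p0: "\<pi> p0 \<noteq> p0" using ne by (auto simp: fun_eq_iff)
  have n1: "1 \<le> n"
  proof (rule ccontr)
    assume "\<not> 1 \<le> n"
    then have "p0 < 1 \<or> n < p0" by auto
    then show False using out[of p0] p0 by blast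
  qed
  obtain m where m: "1 \<le> m" "m \<le> n" "\<pi> m = n" using surj[of n] n1 by auto
  have inc: "\<pi> x < \<pi> y" if "1 \<le> x" "x < y" "y \<le> m" for x y
  proof (cases "y = m")
    case True
    have "\<pi> x \<noteq> n" using inj[of x m] m that True by auto
    then show ?thesis using rng[of x] that m True by auto
  next
    case False
    have "\<pi> y \<noteq> n" using inj[of y m] m that False by auto
    then have "\<pi> y < \<pi> m" using rng[of y] that m by auto
    then have "\<not> \<pi> y < \<pi> x" using NV[of x y m] that False m by auto
    moreover have "\<pi> y \<noteq> \<pi> x" using inj[of y x] that by auto
    ultimately show ?thesis by auto
  qed
  have dec: "\<pi> y < \<pi> x" if "m \<le> x" "x < y" "y \<le> n" for x y
  proof (cases "x = m")
    case True
    have "\<pi> y \<noteq> n" using inj[of y m] m that True by auto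
    then show ?thesis using rng[of y] that m True by auto
  next
    case False
    have "\<pi> x \<noteq> n" using inj[of x m] m that False by auto
    then have "\<pi> x < \<pi> m" using rng[of x] that m by auto
    then have "\<not> \<pi> x < \<pi> y" using NV[of m x y] that False m by auto
    moreover have "\<pi> y \<noteq> \<pi> x" using inj[of y x] that by auto
    ultimately show ?thesis by auto
  qed
  define l where "l = (LEAST q. \<pi> q \<noteq> q)"
  have lex: "\<pi> l \<noteq> l" unfolding l_def using p0 by (rule LeastI)
  have lfix: "\<pi> q = q" if "q < l" for q
    using not_less_Least[of q "\<lambda>q. \<pi> q \<noteq> q"] that unfolding l_def by blast
  have l1: "1 \<le> l" using lex out[of 0] by (cases l) auto
  have ln: "l \<le> n" using lex out[of l] by force
  have G: "l \<le> \<pi> q" if "l \<le> q" "q \<le> n" for q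
  proof (rule ccontr)
    assume "\<not> l \<le> \<pi> q"
    then have "\<pi> (\<pi> q) = \<pi> q" using lfix by auto
    then have "\<pi> q = q" using inj by blast
    then show False using \<open>\<not> l \<le> \<pi> q\<close> that by auto
  qed
  define v where "v = \<pi> l"
  have vl: "l < v" using G[of l] ln lex unfolding v_def by auto
  have ml: "l \<le> m"
  proof (rule ccontr)
    assume "\<not> l \<le> m" then have "\<pi> m = m" using lfix by auto
    then show False using m ln \<open>\<not> l \<le> m\<close> by auto
  qed
  have pin: "\<pi> n = l"
  proof -
    obtain q where q: "1 \<le> q" "q \<le> n" "\<pi> q = l" using surj[of l] l1 ln by auto
    have "l \<le> q" using lfix[of q] q lex by (cases "q < l") auto
    moreover have "q \<noteq> l" using q lex by auto
    ultimately have lq: "l < q" by auto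
    show ?thesis
    proof (cases "q = n")
      case True then show ?thesis using q by simp
    next
      case False
      then have qn: "q < n" using q by auto
      have "\<pi> n \<noteq> l" using inj[of n q] q False by auto
      then have "l < \<pi> n" using G[of n] ln by auto
      moreover have "\<pi> q < \<pi> l" using q vl v_def by auto
      ultimately show ?thesis using NV[of l q n] l1 lq qn q by auto
    qed
  qed
  have lln: "l < n" using pin lex ln by (cases "l = n") auto
  have mn: "m < n" using pin m lln by (cases "m = n") auto
  have sm: "s m = l" unfolding s_def using m pin by simp
  have sn: "s n = v" unfolding s_def v_def using pin by simp
  have SQ: "s y < s x" if "l \<le> y" "y < m" "m < x" "x \<le> n" for x y
  proof -
    have "l \<le> \<pi> x" "\<pi> x \<le> n" using G[of x] rng[of x] that ml l1 by auto
    then have sxl: "l \<le> s x" unfolding s_def using G[of "\<pi> x"] by auto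
    have "s x \<noteq> s m" unfolding s_def using inj that by (metis comp_apply less_irrefl)
    then have sxl2: "l < s x" using sxl sm by auto
    have "s y \<noteq> s x" unfolding s_def using inj that by (metis comp_apply less_trans less_irrefl)
    moreover have "\<not> s x < s y"
    proof
      assume "s x < s y"
      then show False using SV[of y m x] that l1 sm sxl2 by auto
    qed
    ultimately show ?thesis by auto
  qed
  have vm: "m < v"
  proof (rule ccontr)
    assume "\<not> m < v"
    then have vle: "v \<le> m" by auto
    then have lm: "l < m" using vl by auto
    have "\<pi> l < \<pi> v" using inc[of l v] l1 vl vle by auto
    then have "s n < s l" using sn unfolding s_def v_def by simp
    then show False using SQ[of l n] lm mn by auto
  qed
  have vn: "v \<le> n" using rng[of l] l1 ln unfolding v_def by auto
  have E1: "v + m \<le> n + l"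
  proof -
    have sub: "{l..<v} \<subseteq> \<pi> ` {m+1..n}"
    proof
      fix x assume x: "x \<in> {l..<v}"
      obtain q where q: "1 \<le> q" "q \<le> n" "\<pi> q = x" using surj[of x] x l1 vn by auto
      have lq: "l \<le> q" using lfix[of q] q x by (cases "q < l") auto
      have "\<not> q \<le> m"
      proof
        assume "q \<le> m"
        then have "v \<le> \<pi> q" using inc[of l q] l1 lq unfolding v_def by (cases "l = q") auto
        then show False using q x by auto
      qed
      then show "x \<in> \<pi> ` {m+1..n}" using q by auto
    qed
    have "card {l..<v} \<le> card (\<pi> ` {m+1..n})" by (rule card_mono[OF _ sub]) auto
    also have "\<dots> \<le> card {m+1..n}" by (rule card_image_le) auto
    finally show ?thesis using vl mn by simp
  qed
  have E2: "n + l \<le> v + m"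
  proof (cases "l = m")
    case True
    then have "v = n" using m v_def by simp
    then show ?thesis using True by simp
  next
    case False
    then have lm: "l < m" using ml by auto
    have sl: "s l \<le> m"
    proof (rule ccontr)
      assume "\<not> s l \<le> m"
      then have tm: "m < s l" by auto
      have sln: "s l \<le> n" unfolding s_def using rng[of l] rng[of "\<pi> l"] l1 ln by auto
      have sub: "{l+1..s l} \<subseteq> s ` {l..<m}"
      proof
        fix x assume x: "x \<in> {l+1..s l}"
        obtain q' where q': "1 \<le> q'" "q' \<le> n" "\<pi> q' = x" using surj[of x] x sln l1 by auto
        obtain q where q: "1 \<le> q" "q \<le> n" "\<pi> q = q'" using surj[of q'] q' by auto
        have sq: "s q = x" unfolding s_def using q q' by simp
        have lq: "l \<le> q"
        proof (rule ccontr)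
          assume "\<not> l \<le> q"
          then have "\<pi> q = q" using lfix by auto
          then have "q' = q" using q by simp
          then have "x = q" using q' \<open>\<pi> q = q\<close> by simp
          then show False using x \<open>\<not> l \<le> q\<close> by auto
        qed
        have "q \<noteq> m" using sq sm x by auto
        moreover have "\<not> m < q"
        proof
          assume "m < q"
          then have "s l < s q" using SQ[of l q] lm q by auto
          then show False using sq x by auto
        qed
        ultimately show "x \<in> s ` {l..<m}" using lq sq by force
      qed
      have "card {l+1..s l} \<le> card (s ` {l..<m})" by (rule card_mono[OF _ sub]) auto
      also have "\<dots> \<le> card {l..<m}" by (rule card_image_le) auto
      finally show False using tm lm by simp
    qed
    then have pv: "\<pi> v \<le> m" unfolding s_def v_def by simp
    have sub: "\<pi> ` {v..n} \<subseteq> {l..m}"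
    proof
      fix x assume "x \<in> \<pi> ` {v..n}"
      then obtain q where q: "v \<le> q" "q \<le> n" "x = \<pi> q" by auto
      have "l \<le> \<pi> q" using G[of q] q vl by auto
      moreover have "\<pi> q \<le> \<pi> v" using dec[of v q] q vm by (cases "q = v") auto
      ultimately show "x \<in> {l..m}" using q pv by auto
    qed
    have injv: "inj_on \<pi> {v..n}" using inj by (auto simp: inj_on_def)
    have "card {v..n} = card (\<pi> ` {v..n})" using card_image[OF injv] by simp
    also have "\<dots> \<le> card {l..m}" by (rule card_mono[OF _ sub]) auto
    finally show ?thesis using vn ml by simp
  qed
  have vE: "v + m = n + l" using E1 E2 by simp
  have left: "\<pi> q = q + n - m" if "l \<le> q" "q \<le> m" for q
  proof -
    have i1: "\<pi> l + (q - l) \<le> \<pi> q"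
      by (rule gap_inc[of l m \<pi> q]) (use inc l1 that in auto)
    have i2: "\<pi> q + (m - q) \<le> \<pi> m"
      by (rule gap_inc[of q m \<pi> m]) (use inc l1 that in auto)
    show ?thesis using i1 i2 vE m that unfolding v_def by linarith
  qed
  have right: "\<pi> q = l + n - q" if "m < q" "q \<le> n" for q
  proof -
    have d1: "\<pi> n + (n - q) \<le> \<pi> q"
      by (rule gap_dec[of q n \<pi> n]) (use dec that in auto)
    have up: "\<pi> (m+1) < v"
    proof (rule ccontr)
      assume "\<not> \<pi> (m+1) < v"
      then have h1: "v \<le> \<pi> (m+1)" by auto
      have h2: "\<pi> (m+1) < n" using dec[of m "m+1"] m mn by auto
      define r where "r = \<pi> (m+1) + m - n"
      have r1: "l \<le> r" "r < m" using h1 h2 vE unfolding r_def by linarith+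
      have "\<pi> r = r + n - m" using left[of r] r1 by auto
      also have "\<dots> = \<pi> (m+1)" using h2 h1 vE vm unfolding r_def by linarith
      finally have "r = m + 1" using inj by blast
      then show False using r1 by auto
    qed
    have d2: "\<pi> q + (q - (m+1)) \<le> \<pi> (m+1)"
      by (rule gap_dec[of "m+1" n \<pi> q]) (use dec that in auto)
    show ?thesis using d1 d2 up pin vE that by linarith
  qed
  show ?thesis
  proof (intro exI conjI)
    show "l - 1 < m" using l1 ml by auto
    show "2 * m \<le> n + (l - 1)" using vm vE l1 by linarith
    show "\<pi> = P n (l - 1) m"
    proof
      fix q
      consider "q < l" | "l \<le> q" "q \<le> m" | "m < q" "q \<le> n" | "n < q" by linarith
      then show "\<pi> q = P n (l - 1) m q"
      proof cases
        case 1 then show ?thesis using lfix[of q] l1 unfolding P_def by auto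
      next
        case 2 then show ?thesis using left[of q] l1 unfolding P_def by auto
      next
        case 3 then show ?thesis using right[of q] l1 ml unfolding P_def by auto
      next
        case 4 then show ?thesis using out[of q] l1 ml mn unfolding P_def by auto
      qed
    qed
  qed
qed


definition Par :: "nat \<Rightarrow> (nat \<times> nat) set" where
  "Par n = {(a,m). a < m \<and> 2*m \<le> n+a}"

lemma Bset: "{\<pi>. \<pi> permutes {1..n} \<and> avoids \<pi> n [3,1,2] \<and> avoids \<pi> n [2,1,3] \<and> avoids (\<pi> \<circ> \<pi>) n [3,1,2]}
   = insert id ((\<lambda>(a,m). P n a m) ` Par n)" (is "?B = ?R")
proof
  show "?B \<subseteq> ?R"
  proof
    fix \<pi> assume "\<pi> \<in> ?B"
    then have h: "\<pi> permutes {1..n}" "\<not> contains \<pi> n [3,1,2]" "\<not> contains \<pi> n [2,1,3]"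
      "\<not> contains (\<pi> \<circ> \<pi>) n [3,1,2]" by (auto simp: avoids_def)
    show "\<pi> \<in> ?R"
    proof (cases "\<pi> = id")
      case True then show ?thesis by simp
    next
      case False
      then obtain a m where "a < m" "2*m \<le> n+a" "\<pi> = P n a m" using necessity[OF h] by blast
      then show ?thesis unfolding Par_def by auto
    qed
  qed
next
  show "?R \<subseteq> ?B"
  proof
    fix \<pi> assume "\<pi> \<in> ?R"
    then consider "\<pi> = id" | a m where "a < m" "2*m \<le> n+a" "\<pi> = P n a m" unfolding Par_def by auto
    then show "\<pi> \<in> ?B"
    proof cases
      case 1
      have "\<not> contains id n [3,1,2]" unfolding c312 by auto
      moreover have "\<not> contains id n [2,1,3]" unfolding c213 by auto
      ultimately show ?thesis using 1 by (simp add: avoids_def permutes_id)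
    next
      case 2
      have "\<not> contains (P n a m) n [3,1,2]" unfolding c312 not_less using P_nv1[OF 2(1,2)] by blast
      moreover have "\<not> contains (P n a m) n [2,1,3]" unfolding c213 not_less using P_nv2[OF 2(1,2)] by blast
      moreover have "\<not> contains (Q n a m) n [3,1,2]" unfolding c312 not_less using Q_av[OF 2(1,2)] by blast
      ultimately show ?thesis using 2 P_permutes[OF 2(1,2)] P_sq[OF 2(1,2)] by (simp add: avoids_def)
    qed
  qed
qed

lemma id_notin: "id \<notin> (\<lambda>(a,m). P n a m) ` Par n"
proof
  assume "id \<in> (\<lambda>(a,m). P n a m) ` Par n"
  then obtain a m where am: "a < m" "2*m \<le> n+a" "P n a m = id" unfolding Par_def by auto
  then have "P n a m (a+1) = a + 1" by simp
  then show False using am unfolding P_def by auto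
qed

lemma P_inj: "inj_on (\<lambda>(a,m). P n a m) (Par n)"
proof (rule inj_onI, clarsimp simp: Par_def)
  fix a m a' m' assume h: "a < m" "2*m \<le> n+a" "a' < m'" "2*m' \<le> n+a'" "P n a m = P n a' m'"
  have aa: "a = a'"
  proof (rule ccontr)
    assume "a \<noteq> a'"
    then consider "a < a'" | "a' < a" by linarith
    then show False
    proof cases
      case 1
      have "P n a m (a+1) = P n a' m' (a+1)" using h by simp
      then show False using 1 h unfolding P_def by auto
    next
      case 2
      have "P n a m (a'+1) = P n a' m' (a'+1)" using h by simp
      then show False using 2 h unfolding P_def by auto
    qed
  qed
  have "P n a m (a+1) = P n a' m' (a+1)" using h by simp
  then have "m = m'" using h aa unfolding P_def by auto
  then show "a = a' \<and> m = m'" using aa by simp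
qed

lemma Par_eq: "Par n = (\<lambda>(c,a). (a, a+c)) ` (SIGMA c:{1..n div 2}. {0..n-2*c})"
proof
  show "Par n \<subseteq> (\<lambda>(c,a). (a, a+c)) ` (SIGMA c:{1..n div 2}. {0..n-2*c})"
  proof
    fix x assume "x \<in> Par n"
    then obtain a m where x: "x = (a,m)" "a < m" "2*m \<le> n+a" unfolding Par_def by auto
    have "(m - a, a) \<in> (SIGMA c:{1..n div 2}. {0..n-2*c})" using x by auto
    moreover have "x = (\<lambda>(c,a). (a, a+c)) (m - a, a)" using x by auto
    ultimately show "x \<in> (\<lambda>(c,a). (a, a+c)) ` (SIGMA c:{1..n div 2}. {0..n-2*c})" by blast
  qed
next
  show "(\<lambda>(c,a). (a, a+c)) ` (SIGMA c:{1..n div 2}. {0..n-2*c}) \<subseteq> Par n"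
    unfolding Par_def by auto
qed

lemma card_Par: "card (Par n) = (\<Sum>c\<in>{1..n div 2}. n - 2*c + 1)"
proof -
  have "inj_on (\<lambda>(c,a). (a, a+c)) (SIGMA c:{1..n div 2}. {0..n-2*c})"
    by (auto simp: inj_on_def)
  then have "card (Par n) = card (SIGMA c:{1..n div 2}. {0..n-2*c})"
    unfolding Par_eq by (rule card_image)
  also have "\<dots> = (\<Sum>c\<in>{1..n div 2}. card {0..n-2*c})" by (rule card_SigmaI) auto
  also have "\<dots> = (\<Sum>c\<in>{1..n div 2}. n - 2*c + 1)" by simp
  finally show ?thesis .
qed

lemma sumf: "2*k \<le> n \<Longrightarrow> (\<Sum>c\<in>{1..k}. n - 2*c + 1) + k*(k+1) = k*(n+1::nat)"
proof (induction k)
  case 0 then show ?case by simp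
next
  case (Suc k)
  have IH: "(\<Sum>c\<in>{1..k}. n - 2*c + 1) + k*(k+1) = k*(n+1)" using Suc by simp
  have e0: "(\<Sum>c\<in>{1..Suc k}. n - 2*c + 1) = (\<Sum>c\<in>{1..k}. n - 2*c + 1) + (n - 2*(Suc k) + 1)" by simp
  have e1: "Suc k * (Suc k + 1) = k*(k+1) + 2*k + 2" by (simp add: algebra_simps)
  have e2: "Suc k * (n + 1) = k*(n+1) + n + 1" by (simp add: algebra_simps)
  have p2: "2*k + 2 \<le> n" using Suc.prems by simp
  then obtain d where nd: "n = 2*k + 2 + d" using le_Suc_ex by blast
  have e3: "n - 2*(Suc k) + 1 = d + 1" using nd by simp
  show ?case unfolding e0 e1 e2 e3 using IH nd by linarith
qed

lemma cntB: "cnt n [3,1,2] [2,1,3] [3,1,2] = (\<Sum>c\<in>{1..n div 2}. n - 2*c + 1) + 1"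
proof -
  have "finite (Par n)"
  proof (rule finite_subset)
    show "Par n \<subseteq> {0..n} \<times> {0..n}" unfolding Par_def by auto
  qed auto
  then have fin: "finite ((\<lambda>(a,m). P n a m) ` Par n)" by simp
  have "cnt n [3,1,2] [2,1,3] [3,1,2] = card (insert id ((\<lambda>(a,m). P n a m) ` Par n))"
    unfolding cnt_def Bset ..
  also have "\<dots> = card ((\<lambda>(a,m). P n a m) ` Par n) + 1"
    using fin id_notin by simp
  also have "\<dots> = card (Par n) + 1" using card_image[OF P_inj] by simp
  finally show ?thesis using card_Par by simp
qed

theorem theorem3p3:
  fixes n :: nat
  assumes "n \<ge> 1"
  shows "cnt n [2,3,1] [1,3,2] [2,3,1] = cnt n [3,1,2] [2,1,3] [3,1,2]
       \<and> (\<forall>k. n = 2*k \<longrightarrow> cnt n [3,1,2] [2,1,3] [3,1,2] = k^2 + 1)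
       \<and> (\<forall>k. n = 2*k+1 \<longrightarrow> cnt n [3,1,2] [2,1,3] [3,1,2] = k^2 + k + 1)"
proof (intro conjI allI impI)
  show "cnt n [2,3,1] [1,3,2] [2,3,1] = cnt n [3,1,2] [2,1,3] [3,1,2]" by (rule first_eq)
next
  fix k assume n: "n = 2*k"
  then have d: "n div 2 = k" by simp
  define S where "S = (\<Sum>c\<in>{1..k}. n - 2*c + 1)"
  have h1: "S + k*(k+1) = k*(n+1)" unfolding S_def by (rule sumf) (use n in simp)
  have h2: "k*(n+1) = k*(k+1) + k^2" unfolding n by (simp add: power2_eq_square algebra_simps)
  have "S = k^2" using h1 h2 by linarith
  moreover have "cnt n [3,1,2] [2,1,3] [3,1,2] = S + 1" unfolding S_def using cntB[of n] d by simp
  ultimately show "cnt n [3,1,2] [2,1,3] [3,1,2] = k^2 + 1" by simp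
next
  fix k assume n: "n = 2*k+1"
  then have d: "n div 2 = k" by simp
  define S where "S = (\<Sum>c\<in>{1..k}. n - 2*c + 1)"
  have h1: "S + k*(k+1) = k*(n+1)" unfolding S_def by (rule sumf) (use n in simp)
  have h2: "k*(n+1) = k*(k+1) + k^2 + k" unfolding n by (simp add: power2_eq_square algebra_simps)
  have "S = k^2 + k" using h1 h2 by linarith
  moreover have "cnt n [3,1,2] [2,1,3] [3,1,2] = S + 1" unfolding S_def using cntB[of n] d by simp
  ultimately show "cnt n [3,1,2] [2,1,3] [3,1,2] = k^2 + k + 1" by simp
qed

end
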